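(* Let $n\ge1$, let $\mathbf{v}=(v_1,\dots,v_n)\in\mathbb{R}^n$ with $v_e>0$ for all $e$, let $V_c>0$, and let $\mathbf{w}\in\mathbb{R}^n_+$ (i.e. $\mathbf{w}\ge 0$). Consider the knapsack problem $$(\mathcal{P}_{kp}):\ \min\{P_u(\boldsymbol{\rho})=-\mathbf{w}^T\boldsymbol{\rho}\ :\ \mathbf{v}^T\boldsymbol{\rho}\le V_c,\ \boldsymbol{\rho}\in\{0,1\}^n\},$$ the set $\mathcal{S}_a^+=\{(\boldsymbol{\sigma},\tau)\in\mathbb{R}^n\times\mathbb{R}:\boldsymbol{\sigma}>0,\ \tau\ge 0\}$, and the canonical dual problem $$(\mathcal{P}_u^d):\ \max\Big\{P_u^d(\boldsymbol{\sigma},\tau)=-\sum_{e=1}^n\frac{(\sigma_e+w_e-\tau v_e)^2}{4\sigma_e}-\tau V_c\ :\ (\boldsymbol{\sigma},\tau)\in\mathcal{S}_a^+\Big\}.$$ If $\bar{\boldsymbol{\zeta}}=(\bar{\boldsymbol{\sigma}},\bar\tau)\in\mathcal{S}_a^+$ is a solution to $(\mathcal{P}_u^d)$, then $$\bar{\boldsymbol{\rho}}=\tfrac12[\mathrm{Diag}(\bar{\boldsymbol{\sigma}})]^{-1}(\bar{\boldsymbol{\sigma}}-\bar\tau\mathbf{v}+\mathbf{w})$$ is a unique global optimal solution to $(\mathcal{P}_{kp})$, and $$P_u(\bar{\boldsymbol{\rho}})=\min_{\boldsymbol{\rho}\in\mathcal{Z}_a}P_u(\boldsymbol{\rho})=\max_{\boldsymbol{\zeta}\in\mathcal{S}_a^+}P_u^d(\boldsymbol{\zeta})=P_u^d(\bar{\boldsymbol{\zeta}}),$$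 where $\mathcal{Z}_a=\{\boldsymbol{\rho}\in\{0,1\}^n:\mathbf{v}^T\boldsymbol{\rho}\le V_c\}$.
   Context: Vector inequalities are componentwise; $\boldsymbol{\sigma}>0$ means every component is strictly positive. In the paper $\mathbf{w}=\mathbf{c}(\mathbf{u})$ is the vector of element strain energies for a given displacement $\mathbf{u}$, and $\mathbf{v}$ is the vector of element volumes. *)

theory Defs
  imports "HOL-Analysis.Analysis"
begin

text \<open>Vectors in R^n are modelled as real^'n for a finite index type 'n (so n \<ge> 1).\<close>

definition Pu :: "real^'n \<Rightarrow> real^'n \<Rightarrow> real" where
  "Pu w \<rho> = - (w \<bullet> \<rho>)"

definition Za :: "real^'n \<Rightarrow> real \<Rightarrow> (real^'n) set" where
  "Za v Vc = {\<rho>. (\<forall>e. \<rho>$e \<in> {0,1}) \<and> v \<bullet> \<rho> \<le> Vc}"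

definition Sa :: "((real^'n) \<times> real) set" where
  "Sa = {(\<sigma>, \<tau>). (\<forall>e. \<sigma>$e > 0) \<and> \<tau> \<ge> 0}"

definition Pd :: "real^'n \<Rightarrow> real^'n \<Rightarrow> real \<Rightarrow> (real^'n) \<times> real \<Rightarrow> real" where
  "Pd v w Vc \<zeta> = (case \<zeta> of (\<sigma>, \<tau>) \<Rightarrow>
      - (\<Sum>e\<in>UNIV. (\<sigma>$e + w$e - \<tau> * v$e)^2 / (4 * \<sigma>$e)) - \<tau> * Vc)"

definition rho_bar :: "real^'n \<Rightarrow> real^'n \<Rightarrow> real^'n \<Rightarrow> real \<Rightarrow> real^'n" where
  "rho_bar v w \<sigma> \<tau> = (\<chi> e. (\<sigma>$e - \<tau> * v$e + w$e) / (2 * \<sigma>$e))"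

end

theory Submission imports Defs begin

lemma sum_diff_one:
  fixes f g :: "'a::finite \<Rightarrow> real"
  assumes "\<And>i. i \<noteq> e \<Longrightarrow> f i = g i"
  shows "sum f UNIV = sum g UNIV + f e - g e"
proof -
  have "sum f UNIV = f e + sum f (UNIV - {e})" by (simp add: sum.remove)
  moreover have "sum g UNIV = g e + sum g (UNIV - {e})" by (simp add: sum.remove)
  moreover have "sum f (UNIV - {e}) = sum g (UNIV - {e})" by (rule sum.cong) (auto simp: assms)
  ultimately show ?thesis by linarith
qed

lemma scal_key:
  fixes s a :: real
  assumes s: "s > 0" and h: "\<And>t. t > 0 \<Longrightarrow> (s + a)^2 / (4 * s) \<le> (t + a)^2 / (4*t)"
  shows "a \<noteq> 0 \<and> s = \<bar>a\<bar>"
proof (cases "a = 0")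
  case True
  have "(s + a)^2 / (4 * s) \<le> (s/2 + a)^2 / (4*(s/2))" using h[of "s/2"] s by simp
  with True s show ?thesis by (simp add: power2_eq_square field_simps)
next
  case False
  have "(s + a)^2 / (4 * s) \<le> (\<bar>a\<bar> + a)^2 / (4*\<bar>a\<bar>)" using h[of "\<bar>a\<bar>"] False by simp
  moreover have "(s + a)^2 / (4 * s) - (\<bar>a\<bar> + a)^2 / (4*\<bar>a\<bar>) = (s - \<bar>a\<bar>)^2/(4 * s)"
    using s False by (cases "a > 0") (auto simp: field_simps power2_eq_square)
  ultimately have "(s - \<bar>a\<bar>)^2/(4 * s) \<le> 0" by linarith
  then have "(s - \<bar>a\<bar>)^2 \<le> 0" using s by (simp add: divide_le_0_iff)
  then show ?thesis using False by simp
qed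

lemma term_abs:
  fixes b :: real assumes "b \<noteq> 0"
  shows "(\<bar>b\<bar> + b)^2 / (4*\<bar>b\<bar>) = (if b > 0 then b else 0)"
  using assms by (cases "b > 0") (auto simp: field_simps power2_eq_square)

lemma term_weak:
  fixes s c r :: real assumes "s > 0" "r \<in> {0,1}"
  shows "c * r \<le> (s + c)^2 / (4 * s)"
proof -
  have "4 * s*(c*r) \<le> (s+c)^2"
  proof (cases "r = 0")
    case True then show ?thesis by simp
  next
    case False then have "r = 1" using assms by auto
    moreover have "(s+c)^2 - 4 * s*c = (s-c)^2" by (simp add: power2_eq_square algebra_simps)
    moreover have "(s-c)^2 \<ge> 0" by simp
    ultimately show ?thesis by (simp add: algebra_simps)
  qed
  then show ?thesis using assms by (simp add: field_simps)
qed

lemma Za_finite: "finite (Za (v::real^'n) Vc)"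
proof -
  have "Za v Vc \<subseteq> vec_lambda ` (PiE UNIV (\<lambda>_. {0::real,1}))"
  proof
    fix \<rho> assume "\<rho> \<in> Za v Vc"
    then have "vec_nth \<rho> \<in> PiE UNIV (\<lambda>_. {0::real,1})" by (auto simp: Za_def PiE_UNIV_domain)
    then show "\<rho> \<in> vec_lambda ` (PiE UNIV (\<lambda>_. {0::real,1}))" by (metis image_eqI vec_nth_inverse)
  qed
  moreover have "finite (PiE (UNIV::'n set) (\<lambda>_. {0::real,1}))" by (rule finite_PiE) auto
  ultimately show ?thesis by (meson finite_imageI finite_subset)
qed

theorem theorem2:
  fixes v w \<sigma> :: "real^'n" and Vc \<tau> :: real
  assumes v_pos: "\<forall>e. v$e > 0"
    and Vc_pos: "Vc > 0"
    and w_nonneg: "\<forall>e. w$e \<ge> 0"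
    and dual_feas: "(\<sigma>, \<tau>) \<in> Sa"
    and dual_opt: "\<forall>\<zeta>\<in>Sa. Pd v w Vc \<zeta> \<le> Pd v w Vc (\<sigma>, \<tau>)"
  shows "rho_bar v w \<sigma> \<tau> \<in> Za v Vc
    \<and> (\<forall>\<rho>\<in>Za v Vc. Pu w (rho_bar v w \<sigma> \<tau>) \<le> Pu w \<rho>)
    \<and> (\<forall>\<rho>\<in>Za v Vc. Pu w \<rho> = Pu w (rho_bar v w \<sigma> \<tau>) \<longrightarrow> \<rho> = rho_bar v w \<sigma> \<tau>)
    \<and> Pu w (rho_bar v w \<sigma> \<tau>) = Min (Pu w ` Za v Vc)
    \<and> Min (Pu w ` Za v Vc) = (SUP \<zeta>\<in>Sa. Pd v w Vc \<zeta>)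
    \<and> (SUP \<zeta>\<in>Sa. Pd v w Vc \<zeta>) = Pd v w Vc (\<sigma>, \<tau>)"
proof -
  have sp: "\<And>e. \<sigma>$e > 0" and tp: "\<tau> \<ge> 0" using dual_feas by (auto simp: Sa_def)
  define a where "a e = w$e - \<tau> * v$e" for e
  define F where "F s t e = (s$e + w$e - t * v$e)^2 / (4 * s$e)" for s :: "real^'n" and t e
  have Pd_eq: "Pd v w Vc (s, t) = - sum (F s t) UNIV - t * Vc" for s t
    by (simp add: Pd_def F_def)
  have key: "a e \<noteq> 0 \<and> \<sigma>$e = \<bar>a e\<bar>" for e
  proof (rule scal_key[OF sp])
    fix t :: real assume t: "t > 0"
    define s' where "s' = (\<chi> i. if i = e then t else \<sigma>$i)"
    have "(s', \<tau>) \<in> Sa" using t sp tp by (auto simp: Sa_def s'_def)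
    then have "Pd v w Vc (s', \<tau>) \<le> Pd v w Vc (\<sigma>, \<tau>)" using dual_opt by blast
    then have le: "sum (F \<sigma> \<tau>) UNIV \<le> sum (F s' \<tau>) UNIV" by (simp add: Pd_eq)
    have "sum (F s' \<tau>) UNIV = sum (F \<sigma> \<tau>) UNIV + F s' \<tau> e - F \<sigma> \<tau> e"
      by (rule sum_diff_one) (simp add: F_def s'_def)
    with le have "F \<sigma> \<tau> e \<le> F s' \<tau> e" by linarith
    then show "(\<sigma>$e + a e)^2 / (4 * \<sigma>$e) \<le> (t + a e)^2 / (4 * t)"
      by (simp add: F_def s'_def a_def algebra_simps)
  qed
  define r where "r e = (if a e > 0 then 1 else (0::real))" for e
  have rb: "rho_bar v w \<sigma> \<tau> = (\<chi> e. r e)"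
  proof (subst vec_eq_iff, intro allI)
    fix e
    have "\<sigma>$e - \<tau> * v$e + w$e = \<bar>a e\<bar> + a e" using key[of e] by (simp add: a_def)
    then show "rho_bar v w \<sigma> \<tau> $ e = (\<chi> e. r e) $ e"
      using key[of e] by (cases "a e > 0") (auto simp: rho_bar_def r_def)
  qed
  have Fs: "F \<sigma> \<tau> e = r e * a e" for e
  proof -
    have "F \<sigma> \<tau> e = (\<bar>a e\<bar> + a e)^2 / (4 * \<bar>a e\<bar>)"
      using key[of e] by (simp add: F_def a_def algebra_simps)
    also have "\<dots> = r e * a e" using term_abs[of "a e"] key[of e] by (simp add: r_def)
    finally show ?thesis .
  qed
  have PdS: "Pd v w Vc (\<sigma>, \<tau>) = - (\<Sum>e\<in>UNIV. r e * a e) - \<tau> * Vc"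
    by (simp add: Pd_eq Fs)
  define S where "S = (\<Sum>e\<in>UNIV. r e * v$e)"
  define \<delta> where "\<delta> = Min ((\<lambda>e. \<bar>a e\<bar> / (\<bar>v$e\<bar> + 1)) ` UNIV)"
  have dpos: "\<delta> > 0" unfolding \<delta>_def using key by (subst Min_gr_iff) auto
  have dle: "\<delta> \<le> \<bar>a e\<bar> / (\<bar>v$e\<bar> + 1)" for e unfolding \<delta>_def by (rule Min_le) auto
  have pert: "t * (S - Vc) \<le> 0" if t: "\<bar>t\<bar> < \<delta>" "\<tau> + t \<ge> 0" for t
  proof -
    define s' where "s' = (\<chi> e. \<bar>a e - t * v$e\<bar>)"
    have small: "\<bar>t * v$e\<bar> < \<bar>a e\<bar>" for e
    proof -
      have "\<bar>t * v$e\<bar> \<le> \<bar>t\<bar> * (\<bar>v$e\<bar> + 1)" by (simp add: abs_mult mult_left_mono)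
      also have "\<dots> < \<delta> * (\<bar>v$e\<bar> + 1)" using t by (intro mult_strict_right_mono) auto
      also have "\<dots> \<le> \<bar>a e\<bar>" using dle[of e] by (simp add: pos_le_divide_eq)
      finally show ?thesis .
    qed
    have bnz: "a e - t * v$e \<noteq> 0" for e using small[of e] by auto
    have bsg: "(a e - t * v$e > 0) = (a e > 0)" for e using small[of e] by auto
    have "(s', \<tau> + t) \<in> Sa" using bnz t by (auto simp: Sa_def s'_def)
    then have "Pd v w Vc (s', \<tau> + t) \<le> Pd v w Vc (\<sigma>, \<tau>)" using dual_opt by blast
    moreover have "F s' (\<tau> + t) e = r e * (a e - t * v$e)" for e
    proof -
      have "F s' (\<tau> + t) e = (\<bar>a e - t * v$e\<bar> + (a e - t * v$e))^2 / (4 * \<bar>a e - t * v$e\<bar>)"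
        by (simp add: F_def s'_def a_def algebra_simps)
      also have "\<dots> = r e * (a e - t * v$e)" using term_abs[OF bnz[of e]] bsg[of e] by (simp add: r_def)
      finally show ?thesis .
    qed
    ultimately have "- (\<Sum>e\<in>UNIV. r e * (a e - t * v$e)) - (\<tau> + t) * Vc \<le> - (\<Sum>e\<in>UNIV. r e * a e) - \<tau> * Vc"
      by (simp add: Pd_eq Fs)
    moreover have "(\<Sum>e\<in>UNIV. r e * (a e - t * v$e)) = (\<Sum>e\<in>UNIV. r e * a e) - t * S"
      by (simp add: S_def right_diff_distrib sum_subtractf sum_distrib_left algebra_simps)
    ultimately show ?thesis by (simp add: algebra_simps)
  qed
  have Sle: "S \<le> Vc"
  proof -
    have "(\<delta>/2) * (S - Vc) \<le> 0" using pert[of "\<delta>/2"] dpos tp by auto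
    then show ?thesis using dpos by (simp add: mult_le_0_iff)
  qed
  have compl: "\<tau> * (S - Vc) = 0"
  proof (cases "\<tau> = 0")
    case False
    then have tp': "\<tau> > 0" using tp by simp
    define t where "t = - min \<delta> \<tau> / 2"
    have "t * (S - Vc) \<le> 0" using pert[of t] dpos tp' by (auto simp: t_def)
    moreover have "t < 0" using dpos tp' by (auto simp: t_def)
    ultimately have "S \<ge> Vc" by (simp add: mult_le_0_iff)
    then show ?thesis using Sle by simp
  qed simp
  let ?rb = "rho_bar v w \<sigma> \<tau>"
  have rbZ: "?rb \<in> Za v Vc"
    using Sle by (auto simp: Za_def rb r_def S_def inner_vec_def mult.commute)
  have Pu_rb: "Pu w ?rb = Pd v w Vc (\<sigma>, \<tau>)"
  proof -
    have "(\<Sum>e\<in>UNIV. r e * a e) = (\<Sum>e\<in>UNIV. w$e * r e) - \<tau> * S"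
      by (simp add: a_def S_def sum_subtractf sum_distrib_left algebra_simps)
    moreover have "\<tau> * S = \<tau> * Vc" using compl by (simp add: algebra_simps)
    moreover have "Pu w ?rb = - (\<Sum>e\<in>UNIV. w$e * r e)" by (simp add: Pu_def rb inner_vec_def)
    ultimately show ?thesis by (simp add: PdS)
  qed
  have weak: "Pd v w Vc z \<le> Pu w \<rho>" if z: "z \<in> Sa" and \<rho>: "\<rho> \<in> Za v Vc" for z \<rho>
  proof -
    obtain s t where zst: "z = (s, t)" by (cases z)
    have s: "\<And>e. s$e > 0" and t: "t \<ge> 0" using z zst by (auto simp: Sa_def)
    have r01: "\<And>e. \<rho>$e \<in> {0,1}" and rv: "v \<bullet> \<rho> \<le> Vc" using \<rho> by (auto simp: Za_def)
    have "(\<Sum>e\<in>UNIV. (w$e - t * v$e) * \<rho>$e) \<le> sum (F s t) UNIV"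
    proof (rule sum_mono)
      fix e
      have "(w$e - t * v$e) * \<rho>$e \<le> (s$e + (w$e - t * v$e))^2 / (4 * s$e)"
        by (rule term_weak[OF s r01])
      then show "(w$e - t * v$e) * \<rho>$e \<le> F s t e" by (simp add: F_def algebra_simps)
    qed
    moreover have "(\<Sum>e\<in>UNIV. (w$e - t * v$e) * \<rho>$e) = w \<bullet> \<rho> - t * (v \<bullet> \<rho>)"
      by (simp add: inner_vec_def sum_subtractf sum_distrib_left algebra_simps)
    moreover have "t * (v \<bullet> \<rho>) \<le> t * Vc" using t rv by (simp add: mult_left_mono)
    ultimately show ?thesis by (simp add: zst Pd_eq Pu_def)
  qed
  have opt: "\<forall>\<rho>\<in>Za v Vc. Pu w ?rb \<le> Pu w \<rho>"
    using weak[OF dual_feas] Pu_rb by simp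
  have uniq: "\<forall>\<rho>\<in>Za v Vc. Pu w \<rho> = Pu w ?rb \<longrightarrow> \<rho> = ?rb"
  proof (intro ballI impI)
    fix \<rho> assume \<rho>: "\<rho> \<in> Za v Vc" and eq: "Pu w \<rho> = Pu w ?rb"
    have r01: "\<And>e. \<rho>$e \<in> {0,1}" and rv: "v \<bullet> \<rho> \<le> Vc" using \<rho> by (auto simp: Za_def)
    define T where "T e = F \<sigma> \<tau> e - a e * \<rho>$e" for e
    have Tnn: "T e \<ge> 0" for e
    proof -
      have "a e * \<rho>$e \<le> (\<sigma>$e + a e)^2 / (4 * \<sigma>$e)" by (rule term_weak[OF sp r01])
      then show ?thesis by (simp add: T_def F_def a_def algebra_simps)
    qed
    have "(\<Sum>e\<in>UNIV. a e * \<rho>$e) = w \<bullet> \<rho> - \<tau> * (v \<bullet> \<rho>)"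
      by (simp add: a_def inner_vec_def sum_subtractf sum_distrib_left algebra_simps)
    moreover have "\<tau> * (v \<bullet> \<rho>) \<le> \<tau> * Vc" using tp rv by (simp add: mult_left_mono)
    moreover have "sum (F \<sigma> \<tau>) UNIV = w \<bullet> \<rho> - \<tau> * Vc"
      using eq Pu_rb by (simp add: Pd_eq Pu_def)
    ultimately have "sum T UNIV \<le> 0" by (simp add: T_def sum_subtractf)
    then have "sum T UNIV = 0" using Tnn by (meson sum_nonneg order_antisym)
    then have T0: "T e = 0" for e using Tnn by (simp add: sum_nonneg_eq_0_iff)
    show "\<rho> = ?rb"
    proof (subst vec_eq_iff, intro allI)
      fix e
      have "a e * (r e - \<rho>$e) = 0" using T0[of e] by (simp add: T_def Fs algebra_simps)
      then have "\<rho>$e = r e" using key[of e] by simp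
      then show "\<rho>$e = ?rb$e" by (simp add: rb)
    qed
  qed
  have minEq: "Pu w ?rb = Min (Pu w ` Za v Vc)"
    by (rule sym, rule Min_eqI) (use Za_finite rbZ opt in auto)
  have supEq: "(SUP \<zeta>\<in>Sa. Pd v w Vc \<zeta>) = Pd v w Vc (\<sigma>, \<tau>)"
    by (rule cSup_eq_maximum) (use dual_feas dual_opt in auto)
  have m2: "Min (Pu w ` Za v Vc) = (SUP \<zeta>\<in>Sa. Pd v w Vc \<zeta>)"
    using minEq Pu_rb supEq by metis
  show ?thesis
    apply (intro conjI)
         apply (rule rbZ)
        apply (rule opt)
       apply (rule uniq)
      apply (rule minEq)
     apply (rule m2)
    apply (rule supEq)
    done
qed

end
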